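(* For $a,b>1$ define $$x=\frac{\sqrt{a^2-1}\,(a^3-8)}{a^6},\quad x_1=(\sqrt{a^2-1}-\sqrt{b^2-1})^3+a^3,\quad y=\frac{\sqrt{b^2-1}\,(b^3-8)}{b^6},\quad y_1=(\sqrt{a^2-1}-\sqrt{b^2-1})^3+b^3.$$ Let $b_1$ be the only real root in $(\sqrt2,\sqrt2(\sqrt3+1))$ of $p(z)=-2z^5+3z^3+40z^2-48$. Then for all $a\in(1,2)$ and $b\in(\sqrt2,b_1)$, $$x<0,\qquad y_1>0,\qquad \frac{\partial x_1}{\partial b}\le 0,\qquad \frac{\partial (y\,y_1)}{\partial b}>0.$$ *)

theory Defs
  imports "HOL-Analysis.Analysis"
begin

definition lem3_x :: "real \<Rightarrow> real" where
  "lem3_x a = sqrt (a^2 - 1) * (a^3 - 8) / a^6"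

definition lem3_x1 :: "real \<Rightarrow> real \<Rightarrow> real" where
  "lem3_x1 a b = (sqrt (a^2 - 1) - sqrt (b^2 - 1))^3 + a^3"

definition lem3_y :: "real \<Rightarrow> real" where
  "lem3_y b = sqrt (b^2 - 1) * (b^3 - 8) / b^6"

definition lem3_y1 :: "real \<Rightarrow> real \<Rightarrow> real" where
  "lem3_y1 a b = (sqrt (a^2 - 1) - sqrt (b^2 - 1))^3 + b^3"

definition lem3_p :: "real \<Rightarrow> real" where
  "lem3_p z = -2 * z^5 + 3 * z^3 + 40 * z^2 - 48"

end

theory Submission
  imports Defs
begin
lemma d_sqrt: assumes "b > (1::real)" shows "((\<lambda>t. sqrt(t^2-1)) has_real_derivative b / sqrt(b^2-1)) (at b)"
proof -
  have "b^2 > 1" using assms by (simp add: one_less_power)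
  then show ?thesis
    by (auto intro!: derivative_eq_intros simp: field_simps)
qed
lemma d_inner: assumes "b > (1::real)"
  shows "((\<lambda>t. (sqrt(a^2-1) - sqrt(t^2-1))^3) has_real_derivative 3*(sqrt(a^2-1) - sqrt(b^2-1))^2 * (-(b / sqrt(b^2-1)))) (at b)"
proof -
  have d1: "((\<lambda>t. sqrt(a^2-1) - sqrt(t^2-1)) has_real_derivative 0 - b / sqrt(b^2-1)) (at b)"
    by (rule DERIV_diff[OF DERIV_const d_sqrt[OF assms]])
  have "((\<lambda>t. (sqrt(a^2-1) - sqrt(t^2-1))^3) has_real_derivative
      of_nat 3 * ((0 - b / sqrt(b^2-1)) * (sqrt(a^2-1) - sqrt(b^2-1)) ^ (3 - Suc 0))) (at b)"
    by (rule DERIV_power[OF d1])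
  moreover have e: "of_nat 3 * ((0 - b / sqrt(b^2-1)) * (sqrt(a^2-1) - sqrt(b^2-1)) ^ (3 - Suc 0))
     = 3*(sqrt(a^2-1) - sqrt(b^2-1))^2 * (-(b / sqrt(b^2-1)))" by simp
  ultimately show ?thesis by metis
qed
lemma d_x1: assumes "b > (1::real)" shows "((\<lambda>t. lem3_x1 a t) has_real_derivative 3*(sqrt(a^2-1) - sqrt(b^2-1))^2 * (-(b / sqrt(b^2-1)))) (at b)"
proof -
  have "((\<lambda>t. lem3_x1 a t) has_real_derivative 3*(sqrt(a^2-1) - sqrt(b^2-1))^2 * (-(b / sqrt(b^2-1))) + 0) (at b)"
    unfolding lem3_x1_def by (rule DERIV_add[OF d_inner[OF assms] DERIV_const])
  then show ?thesis by simp
qed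
lemma d_y1: assumes "b > (1::real)" shows "((\<lambda>t. lem3_y1 a t) has_real_derivative 3*(sqrt(a^2-1) - sqrt(b^2-1))^2 * (-(b / sqrt(b^2-1))) + 3*b^2) (at b)"
proof -
  have d3: "((\<lambda>t. t^3) has_real_derivative 3*b^2) (at b)"
    using DERIV_pow[of 3 b] by simp
  show ?thesis
    unfolding lem3_y1_def by (rule DERIV_add[OF d_inner[OF assms] d3])
qed
lemma d_y: assumes "b > (1::real)" shows "(lem3_y has_real_derivative lem3_p b / (sqrt(b^2-1) * b^7)) (at b)"
proof -
  have b2: "b^2 > 1" using assms by (simp add: one_less_power)
  define B where "B = sqrt(b^2-1)"
  have s: "B^2 = b^2-1" using b2 unfolding B_def by simp
  have sp: "B > 0" using b2 unfolding B_def by simp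
  have d3: "((\<lambda>t. t^3 - 8) has_real_derivative 3*b^2) (at b)"
    by (auto intro!: derivative_eq_intros)
  have d6: "((\<lambda>t. t^6) has_real_derivative 6*b^5) (at b)"
    by (auto intro!: derivative_eq_intros)
  have "(lem3_y has_real_derivative (((b/B)*(b^3-8) + (3*b^2)*B) * b^6 - B*(b^3-8)*(6*b^5)) / (b^6*b^6)) (at b)"
    unfolding lem3_y_def B_def
    apply (rule DERIV_divide[OF DERIV_mult[OF d_sqrt[OF assms] d3] d6])
    using assms by simp
  moreover have "(((b/B)*(b^3-8) + (3*b^2)*B) * b^6 - B*(b^3-8)*(6*b^5)) / (b^6*b^6) = lem3_p b / (B * b^7)"
  proof -
    have "(((b/B)*(b^3-8) + (3*b^2)*B) * b^6 - B*(b^3-8)*(6*b^5)) / (b^6*b^6)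
       = (b^2*(b^3-8) + B^2*(3*b^3) - B^2*(b^3-8)*6) / (B * b^7)"
      using sp assms apply (subst frac_eq_eq) apply simp apply simp
      apply (simp add: field_simps) apply algebra done
    also have "\<dots> = lem3_p b / (B * b^7)" unfolding s lem3_p_def by algebra
    finally show ?thesis .
  qed
  ultimately show ?thesis unfolding B_def by simp
qed
lemma gpos:
  fixes b :: real
  assumes "707/500 \<le> b" "b \<le> 2"
  shows "-24 - 24*b + 44*b^2 + 35/2*b^3 - 20*b^4 - 5/2*b^5 + b^6 + b^7 > 0"
proof -
  define x where "x = b - 707/500"
  have x0: "0 \<le> x" and x1: "x \<le> 3/5" using assms unfolding x_def by auto
  have eq: "-24 - 24*b + 44*b^2 + 35/2*b^3 - 20*b^4 - 5/2*b^5 + b^6 + b^7 =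
     36904989105612983143 / 7812500000000000000 + x * (298806171744195343 / 15625000000000000 - 428222906216053 / 31250000000000 * x)
     + 635668395607 / 12500000000 * x^3 + 2281651201 / 25000000 * x^4 + 11992829 / 250000 * x^5 + 5449 / 500 * x^6 + x^7"
    unfolding x_def by algebra
  have "428222906216053 / 31250000000000 * x \<le> 428222906216053 / 31250000000000 * (3/5)"
    using x1 by simp
  then have h: "x * (298806171744195343 / 15625000000000000 - 428222906216053 / 31250000000000 * x) \<ge> 0"
    using x0 by (intro mult_nonneg_nonneg) auto
  have "0 \<le> 635668395607 / 12500000000 * x^3 + 2281651201 / 25000000 * x^4 + 11992829 / 250000 * x^5 + 5449 / 500 * x^6 + x^7"
    using x0 by simp
  then show ?thesis unfolding eq using h by linarith
qed

lemma p_sqrt2: "lem3_p (sqrt 2) > 0"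
proof -
  have s2: "sqrt 2 ^ 2 = (2::real)" by simp
  have "sqrt 2 ^ 3 = sqrt 2 ^ 2 * sqrt (2::real)" by algebra
  then have c3: "sqrt 2 ^ 3 = 2 * sqrt (2::real)" using s2 by simp
  have "sqrt 2 ^ 5 = sqrt 2 ^ 2 * sqrt 2 ^ 2 * sqrt (2::real)" by algebra
  then have c5: "sqrt 2 ^ 5 = 4 * sqrt (2::real)" using s2 by simp
  have "sqrt (2::real) < 2" by (rule real_less_lsqrt) auto
  then show ?thesis unfolding lem3_p_def using s2 c3 c5 by simp
qed

lemma p_pos:
  fixes b1 b :: real
  assumes b1_in: "sqrt 2 < b1" "b1 < sqrt 2 * (sqrt 3 + 1)"
    and b1_unique: "\<And>z. sqrt 2 < z \<Longrightarrow> z < sqrt 2 * (sqrt 3 + 1) \<Longrightarrow> lem3_p z = 0 \<Longrightarrow> z = b1"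
    and b: "sqrt 2 < b" "b < b1"
  shows "lem3_p b > 0"
proof (rule ccontr)
  assume "\<not> lem3_p b > 0"
  then have "lem3_p b \<le> 0" by simp
  moreover have "0 \<le> lem3_p (sqrt 2)" using p_sqrt2 by simp
  moreover have "\<forall>x. sqrt 2 \<le> x \<and> x \<le> b \<longrightarrow> isCont lem3_p x"
    unfolding lem3_p_def by (auto intro!: continuous_intros)
  ultimately obtain x where x: "sqrt 2 \<le> x" "x \<le> b" "lem3_p x = 0"
    using IVT2[of lem3_p b 0 "sqrt 2"] b by auto
  have "x \<noteq> sqrt 2" using x(3) p_sqrt2 by auto
  then have "x = b1" using x b b1_in by (intro b1_unique) auto
  then show False using x b by simp
qed

theorem lemma3:
  fixes b1 :: real
  assumes b1_in: "sqrt 2 < b1" "b1 < sqrt 2 * (sqrt 3 + 1)"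
    and b1_root: "lem3_p b1 = 0"
    and b1_unique: "\<And>z. sqrt 2 < z \<Longrightarrow> z < sqrt 2 * (sqrt 3 + 1) \<Longrightarrow> lem3_p z = 0 \<Longrightarrow> z = b1"
  shows "\<forall>a b. 1 < a \<and> a < 2 \<and> sqrt 2 < b \<and> b < b1 \<longrightarrow>
           lem3_x a < 0 \<and> lem3_y1 a b > 0 \<and>
           (\<lambda>t. lem3_x1 a t) differentiable (at b) \<and> deriv (\<lambda>t. lem3_x1 a t) b \<le> 0 \<and>
           (\<lambda>t. lem3_y t * lem3_y1 a t) differentiable (at b) \<and>
           deriv (\<lambda>t. lem3_y t * lem3_y1 a t) b > 0"
proof (intro allI impI)
  fix a b :: real
  assume ab: "1 < a \<and> a < 2 \<and> sqrt 2 < b \<and> b < b1"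
  then have a1: "1 < a" and a2: "a < 2" and bs: "sqrt 2 < b" and bb1: "b < b1" by auto
  have "707/500 < sqrt (2::real)" by (rule real_less_rsqrt) (simp add: power2_eq_square)
  then have bl: "707/500 < b" using bs by simp
  then have b1': "1 < b" by simp
  have pb: "lem3_p b > 0" using p_pos[OF b1_in b1_unique bs bb1] by blast
  define A where "A = sqrt (a^2 - 1)"
  define B where "B = sqrt (b^2 - 1)"
  have a21: "a^2 > 1" using a1 by (simp add: one_less_power)
  have b21: "b^2 > 1" using b1' by (simp add: one_less_power)
  have A2: "A^2 = a^2 - 1" unfolding A_def using a21 by simp
  have B2: "B^2 = b^2 - 1" unfolding B_def using b21 by simp
  have Ap: "A > 0" unfolding A_def using a21 by simp
  have Bp: "B > 0" unfolding B_def using b21 by simp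
  have Bb: "B < b" unfolding B_def using b1' by (intro real_less_lsqrt) auto
  have a3: "a^3 < 8"
    using power_strict_mono[of a 2 3] a1 a2 by simp
  have xneg: "lem3_x a < 0"
    unfolding lem3_x_def using a3 a1 a21
    by (simp add: divide_neg_pos mult_pos_neg)
  have y1e: "lem3_y1 a b = (A - B)^3 + b^3" unfolding lem3_y1_def A_def B_def ..
  have cub: "(A - B)^3 + b^3 = (A - B + b) * ((A - B)^2 - (A - B) * b + b^2)" by algebra
  have q: "(A - B)^2 - (A - B) * b + b^2 > 0"
  proof -
    have "(A - B)^2 - (A - B) * b + b^2 = ((A - B) - b/2)^2 + 3/4 * b^2" by algebra
    moreover have "b^2 > 0" using b1' by simp
    moreover have "((A - B) - b/2)^2 \<ge> 0" by simp
    ultimately show ?thesis by linarith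
  qed
  have y1pos: "lem3_y1 a b > 0" unfolding y1e cub using q Ap Bb by simp
  have dx1: "((\<lambda>t. lem3_x1 a t) has_real_derivative 3*(A - B)^2 * (-(b / B))) (at b)"
    using d_x1[OF b1'] unfolding A_def B_def .
  have dx1n: "3*(A - B)^2 * (-(b / B)) \<le> 0" using Bp b1' by simp
  have dy: "(lem3_y has_real_derivative lem3_p b / (B * b^7)) (at b)" using d_y[OF b1'] unfolding B_def .
  have dy1: "((\<lambda>t. lem3_y1 a t) has_real_derivative 3*(A - B)^2 * (-(b / B)) + 3*b^2) (at b)"
    using d_y1[OF b1'] unfolding A_def B_def .
  define Dy where "Dy = lem3_p b / (B * b^7)"
  define Dy1 where "Dy1 = 3*(A - B)^2 * (-(b / B)) + 3*b^2"
  have dprod: "((\<lambda>t. lem3_y t * lem3_y1 a t) has_real_derivative Dy * lem3_y1 a b + Dy1 * lem3_y b) (at b)"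
    using DERIV_mult[OF dy dy1] unfolding Dy_def Dy1_def .
  have ye: "lem3_y b = B * (b^3 - 8) / b^6" unfolding lem3_y_def B_def ..
  have Dyp: "Dy > 0" unfolding Dy_def using pb Bp b1' by simp
  have "Dy * lem3_y1 a b + Dy1 * lem3_y b > 0"
  proof (cases "b \<ge> 2")
    case True
    have "b^3 \<ge> 2^3" using True by (intro power_mono) auto
    then have yn: "lem3_y b \<ge> 0" unfolding ye using Bp b1' by simp
    have "B^2 \<ge> 3" unfolding B2 using power_mono[OF True, of 2] by simp
    moreover have "A^2 < 3" unfolding A2 using power_strict_mono[of a 2 2] a1 a2 by simp
    ultimately have "A < B" using Ap Bp by (smt (verit) power_mono)
    then have "(B - A)^2 < B^2" using Ap by (intro power_strict_mono) auto
    also have "B^2 < b * B" using Bb Bp by (simp add: power2_eq_square)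
    finally have lt: "(A - B)^2 < b * B" by (simp add: power2_commute)
    have "Dy1 = 3 * b / B * (b * B - (A - B)^2)" unfolding Dy1_def using Bp
      by (simp add: field_simps power2_eq_square)
    then have "Dy1 > 0" using lt Bp b1' by simp
    then have "Dy1 * lem3_y b \<ge> 0" using yn by simp
    moreover have "Dy * lem3_y1 a b > 0" using Dyp y1pos by simp
    ultimately show ?thesis by linarith
  next
    case False
    then have b2: "b \<le> 2" by simp
    have b3: "b^3 \<le> 8" using power_mono[OF b2, of 3] b1' by simp
    have "Dy1 * lem3_y b = 3 * (b^3 - 8) * B / b^4 + 3 * (A - B)^2 * (8 - b^3) / b^5"
      unfolding Dy1_def ye using Bp b1' by (simp add: field_simps) algebra
    moreover have "3 * (A - B)^2 * (8 - b^3) / b^5 \<ge> 0" using b3 b1' by simp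
    ultimately have t2: "Dy1 * lem3_y b \<ge> 3 * (b^3 - 8) * B / b^4" by simp
    have "B^3 \<le> (b^2 - 1) * b^2 / 2"
    proof -
      have "2 * B \<le> B^2 + 1" using zero_le_power2[of "B - 1"] by (simp add: power2_eq_square algebra_simps)
      then have "B \<le> b^2 / 2" unfolding B2 by simp
      then have "B^2 * B \<le> (b^2 - 1) * (b^2 / 2)" unfolding B2 using b21 by (intro mult_left_mono) auto
      then show ?thesis by (simp add: power3_eq_cube power2_eq_square mult.assoc)
    qed
    moreover have "(A - B)^3 + B^3 \<ge> 0"
    proof -
      have "(A - B)^3 + B^3 = A * ((A - 3*B/2)^2 + 3/4 * B^2)" by algebra
      then show ?thesis using Ap by simp
    qed
    ultimately have y1l: "lem3_y1 a b \<ge> b^3 - (b^2 - 1) * b^2 / 2" unfolding y1e by linarith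
    have t1: "Dy * lem3_y1 a b \<ge> Dy * (b^3 - (b^2 - 1) * b^2 / 2)"
      using y1l Dyp by (intro mult_left_mono) auto
    have "Dy * (b^3 - (b^2 - 1) * b^2 / 2) + 3 * (b^3 - 8) * B / b^4
        = (lem3_p b * (b^3 - (b^2 - 1) * b^2 / 2) + 3 * (b^3 - 8) * B^2 * b^3) / (B * b^7)"
      unfolding Dy_def using Bp b1' by (simp add: field_simps) algebra
    also have "\<dots> = b^2 * (-24 - 24*b + 44*b^2 + 35/2*b^3 - 20*b^4 - 5/2*b^5 + b^6 + b^7) / (B * b^7)"
      unfolding B2 lem3_p_def by algebra
    also have "\<dots> > 0" using gpos[of b] bl b2 Bp b1' by simp
    finally show ?thesis using t1 t2 by linarith
  qed
  then show "lem3_x a < 0 \<and> lem3_y1 a b > 0 \<and>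
           (\<lambda>t. lem3_x1 a t) differentiable (at b) \<and> deriv (\<lambda>t. lem3_x1 a t) b \<le> 0 \<and>
           (\<lambda>t. lem3_y t * lem3_y1 a t) differentiable (at b) \<and>
           deriv (\<lambda>t. lem3_y t * lem3_y1 a t) b > 0"
    using xneg y1pos dx1 dx1n dprod DERIV_imp_deriv real_differentiable_def by metis
qed

end
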